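(* Let $\mathbf{A}$ and $\mathbf{B}$ be algebras in the same language and let $e$ be a unary term which is idempotent, separating and dense for both $\mathbf{A}$ and $\mathbf{B}$. Then $\mathbf{A}\cong\mathbf{B}$ if and only if $e(\mathbf{A})\cong e(\mathbf{B})$.
   Context: A unary term $e$ is idempotent for $\mathbf{A}$ if $\mathbf{A}\models e(e(x))=e(x)$. The localization $e(\mathbf{A})$ is the algebra with universe $e(A)$ whose fundamental operation symbols are the symbols $et$, one for each term $t$ in the language of $\mathbf{A}$, where $et$ is interpreted as the restriction to $e(A)$ of the term operation $e(t(x_1,\dots,x_n))$ of $\mathbf{A}$ (so $e(\mathbf{A})$ and $e(\mathbf{B})$ have the same similarity type). The term $e$ separates $\mathbf{A}$ if for all $a\neq b$ in $A$ there is a unary term $g$ with $e(g(a))\neq e(g(b))$. The term $e$ is dense for $\mathbf{A}$ if $\mathbf{A}$ is generated by $e(A)$. *)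

theory Defs
  imports Main
begin

datatype 'f trm = Var nat | App 'f "'f trm list"

fun wf_trm :: "('f \<Rightarrow> nat) \<Rightarrow> 'f trm \<Rightarrow> bool" where
  "wf_trm ar (Var i) = True"
| "wf_trm ar (App f ts) = (length ts = ar f \<and> (\<forall>t\<in>set ts. wf_trm ar t))"

fun vars :: "'f trm \<Rightarrow> nat set" where
  "vars (Var i) = {i}"
| "vars (App f ts) = (\<Union>t\<in>set ts. vars t)"

record ('f, 'a) algebra =
  carrier :: "'a set"
  ops :: "'f \<Rightarrow> 'a list \<Rightarrow> 'a"

fun eval :: "('f, 'a) algebra \<Rightarrow> (nat \<Rightarrow> 'a) \<Rightarrow> 'f trm \<Rightarrow> 'a" where
  "eval A env (Var i) = env i"
| "eval A env (App f ts) = ops A f (map (eval A env) ts)"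

definition is_algebra :: "'f set \<Rightarrow> ('f \<Rightarrow> nat) \<Rightarrow> ('f, 'a) algebra \<Rightarrow> bool" where
  "is_algebra Sym ar A \<longleftrightarrow>
     (\<forall>f\<in>Sym. \<forall>as. length as = ar f \<and> set as \<subseteq> carrier A \<longrightarrow> ops A f as \<in> carrier A)"

definition iso :: "'f set \<Rightarrow> ('f \<Rightarrow> nat) \<Rightarrow> ('f, 'a) algebra \<Rightarrow> ('f, 'b) algebra \<Rightarrow> bool" where
  "iso Sym ar A B \<longleftrightarrow> (\<exists>h. bij_betw h (carrier A) (carrier B) \<and>
     (\<forall>f\<in>Sym. \<forall>as. length as = ar f \<and> set as \<subseteq> carrier A \<longrightarrow>
        h (ops A f as) = ops B f (map h as)))"

definition unary_term :: "('f \<Rightarrow> nat) \<Rightarrow> 'f trm \<Rightarrow> bool" where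
  "unary_term ar e \<longleftrightarrow> wf_trm ar e \<and> vars e \<subseteq> {0}"

definition app1 :: "('f, 'a) algebra \<Rightarrow> 'f trm \<Rightarrow> 'a \<Rightarrow> 'a" where
  "app1 A e x = eval A (\<lambda>_. x) e"

definition idempotent :: "('f, 'a) algebra \<Rightarrow> 'f trm \<Rightarrow> bool" where
  "idempotent A e \<longleftrightarrow> (\<forall>x\<in>carrier A. app1 A e (app1 A e x) = app1 A e x)"

definition separates :: "('f \<Rightarrow> nat) \<Rightarrow> ('f, 'a) algebra \<Rightarrow> 'f trm \<Rightarrow> bool" where
  "separates ar A e \<longleftrightarrow> (\<forall>a\<in>carrier A. \<forall>b\<in>carrier A. a \<noteq> b \<longrightarrow>
     (\<exists>g. unary_term ar g \<and> app1 A e (app1 A g a) \<noteq> app1 A e (app1 A g b)))"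

inductive_set generated :: "'f set \<Rightarrow> ('f \<Rightarrow> nat) \<Rightarrow> ('f, 'a) algebra \<Rightarrow> 'a set \<Rightarrow> 'a set"
  for Sym ar A X where
  gen_base: "x \<in> X \<Longrightarrow> x \<in> generated Sym ar A X"
| gen_op: "f \<in> Sym \<Longrightarrow> length as = ar f \<Longrightarrow> \<forall>a\<in>set as. a \<in> generated Sym ar A X
            \<Longrightarrow> ops A f as \<in> generated Sym ar A X"

definition dense :: "('f \<Rightarrow> nat) \<Rightarrow> ('f, 'a) algebra \<Rightarrow> 'f trm \<Rightarrow> bool" where
  "dense ar A e \<longleftrightarrow> generated UNIV ar A (app1 A e ` carrier A) = carrier A"

text \<open>Localization e(A): symbols are pairs (t, n) with t a term in variables x_0..x_(n-1),
  of arity n, interpreted as the restriction to e(A) of e(t(x_0,...,x_(n-1))).\<close>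
definition loc_sym :: "('f \<Rightarrow> nat) \<Rightarrow> ('f trm \<times> nat) set" where
  "loc_sym ar = {(t, n). wf_trm ar t \<and> vars t \<subseteq> {..<n}}"

definition loc_ar :: "'f trm \<times> nat \<Rightarrow> nat" where
  "loc_ar s = snd s"

definition localization :: "('f, 'a) algebra \<Rightarrow> 'f trm \<Rightarrow> ('f trm \<times> nat, 'a) algebra" where
  "localization A e = \<lparr> carrier = app1 A e ` carrier A,
     ops = (\<lambda>(t, n) as. app1 A e (eval A (\<lambda>i. as ! i) t)) \<rparr>"

end

theory Submission imports Defs begin

fun subst :: "(nat \<Rightarrow> 'f trm) \<Rightarrow> 'f trm \<Rightarrow> 'f trm" where
  "subst \<sigma> (Var i) = \<sigma> i"
| "subst \<sigma> (App f ts) = App f (map (subst \<sigma>) ts)"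

lemma eval_subst: "eval A env (subst \<sigma> t) = eval A (\<lambda>i. eval A env (\<sigma> i)) t"
  by (induction t) (auto intro!: arg_cong[where f="ops A _"])

lemma wf_subst: "wf_trm ar t \<Longrightarrow> (\<forall>i. wf_trm ar (\<sigma> i)) \<Longrightarrow> wf_trm ar (subst \<sigma> t)"
  by (induction t) auto

lemma finite_vars: "finite (vars t)"
  by (induction t) auto

lemma eval_cong: "(\<forall>i\<in>vars t. env i = env' i) \<Longrightarrow> eval A env t = eval A env' t"
  by (induction t) (auto intro!: arg_cong[where f="ops A _"])

lemma eval_closed: "is_algebra UNIV ar A \<Longrightarrow> wf_trm ar t \<Longrightarrow> (\<forall>i\<in>vars t. env i \<in> carrier A)
  \<Longrightarrow> eval A env t \<in> carrier A"
proof (induction t)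
  case (Var x)
  then show ?case by simp
next
  case (App f ts)
  have "set (map (eval A env) ts) \<subseteq> carrier A" using App by auto
  then show ?case using App.prems unfolding is_algebra_def by auto
qed

lemma hom_eval:
  assumes "\<forall>f as. length as = ar f \<and> set as \<subseteq> carrier A \<longrightarrow> h (ops A f as) = ops B f (map h as)"
    and "is_algebra UNIV ar A"
  shows "wf_trm ar t \<Longrightarrow> (\<forall>i\<in>vars t. env i \<in> carrier A) \<Longrightarrow> h (eval A env t) = eval B (h \<circ> env) t"
proof (induction t)
  case (Var x)
  then show ?case by simp
next
  case (App f ts)
  have "set (map (eval A env) ts) \<subseteq> carrier A" using App.prems eval_closed[OF assms(2)] by auto
  then have "h (eval A env (App f ts)) = ops B f (map h (map (eval A env) ts))"
    using assms(1) App.prems by auto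
  also have "\<dots> = eval B (h \<circ> env) (App f ts)"
    using App by (auto simp: comp_def intro!: arg_cong[where f="ops B _"])
  finally show ?case .
qed

lemma app1_closed: "is_algebra UNIV ar A \<Longrightarrow> unary_term ar e \<Longrightarrow> x \<in> carrier A \<Longrightarrow> app1 A e x \<in> carrier A"
  unfolding app1_def unary_term_def by (rule eval_closed) auto

lemma rep:
  assumes "a \<in> generated UNIV ar A X" "x0 \<in> X"
  shows "\<exists>t env. wf_trm ar t \<and> (\<forall>i. env i \<in> X) \<and> eval A env t = a"
  using assms(1)
proof (induction rule: generated.induct)
  case (gen_base x)
  then show ?case by (intro exI[of _ "Var 0"] exI[of _ "\<lambda>_. x"]) auto
next
  case (gen_op f as)
  let ?m = "length as"
  have "\<forall>j<?m. \<exists>p. wf_trm ar (fst p) \<and> (\<forall>i. snd p i \<in> X) \<and> eval A (snd p) (fst p) = as ! j"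
    using gen_op by auto
  then obtain P where P: "\<forall>j<?m. wf_trm ar (fst (P j)) \<and> (\<forall>i. snd (P j) i \<in> X) \<and> eval A (snd (P j)) (fst (P j)) = as ! j"
    by metis
  define env where "env = (\<lambda>i. if i mod ?m < ?m then snd (P (i mod ?m)) (i div ?m) else x0)"
  define ts where "ts = map (\<lambda>j. subst (\<lambda>i. Var (j + ?m * i)) (fst (P j))) [0..<?m]"
  have "\<forall>i. env i \<in> X" using P assms(2) by (auto simp: env_def)
  moreover have "wf_trm ar (App f ts)" using P gen_op(2) by (auto simp: ts_def intro!: wf_subst)
  moreover have "eval A env (App f ts) = ops A f as"
  proof -
    have dm: "\<And>x i. x < ?m \<Longrightarrow> (x + ?m * i) div ?m = i"
      by (metis add.commute add_0 div_less div_mult_self2 less_zeroE)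
    have "map (eval A env) ts = map (\<lambda>j. as ! j) [0..<?m]"
      using P dm by (auto simp: ts_def eval_subst env_def)
    also have "\<dots> = as" by (rule map_nth)
    finally show ?thesis by simp
  qed
  ultimately show ?case by blast
qed

lemma loc_ops: "ops (localization A e) (t, n) as = app1 A e (eval A (\<lambda>i. as ! i) t)"
  by (simp add: localization_def)

lemma loc_carrier: "carrier (localization A e) = app1 A e ` carrier A"
  by (simp add: localization_def)

lemma sep_transfer:
  fixes A :: "('f, 'a) algebra" and B :: "('f, 'b) algebra"
  assumes algB: "is_algebra UNIV ar B" and ue: "unary_term ar e" and sepB: "separates ar B e"
    and kmap: "\<forall>x\<in>app1 A e ` carrier A. k x \<in> app1 B e ` carrier B"
    and khom: "\<forall>s\<in>loc_sym ar. \<forall>as. length as = loc_ar s \<and> set as \<subseteq> carrier (localization A e) \<longrightarrow>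
                 k (ops (localization A e) s as) = ops (localization B e) s (map k as)"
    and wft: "wf_trm ar t" and wfs: "wf_trm ar s"
    and env: "\<forall>i. env i \<in> app1 A e ` carrier A"
    and eq: "eval A env t = eval A env s"
  shows "eval B (k \<circ> env) t = eval B (k \<circ> env) s"
proof (rule ccontr)
  assume ne: "eval B (k \<circ> env) t \<noteq> eval B (k \<circ> env) s"
  have EB: "app1 B e ` carrier B \<subseteq> carrier B" using app1_closed[OF algB ue] by auto
  have kenv: "\<forall>i. (k \<circ> env) i \<in> carrier B" using env kmap EB by (metis comp_apply subsetD)
  have xB: "eval B (k \<circ> env) t \<in> carrier B" using eval_closed[OF algB wft] kenv by auto
  have yB: "eval B (k \<circ> env) s \<in> carrier B" using eval_closed[OF algB wfs] kenv by auto
  obtain g where ug: "unary_term ar g" and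
    gne: "app1 B e (app1 B g (eval B (k \<circ> env) t)) \<noteq> app1 B e (app1 B g (eval B (k \<circ> env) s))"
    using sepB xB yB ne unfolding separates_def by blast
  define gt where "gt = subst (\<lambda>_. t) g"
  define gs where "gs = subst (\<lambda>_. s) g"
  have wfgt: "wf_trm ar gt" using ug wft unfolding gt_def unary_term_def by (auto intro: wf_subst)
  have wfgs: "wf_trm ar gs" using ug wfs unfolding gs_def unary_term_def by (auto intro: wf_subst)
  have "finite (vars gt \<union> vars gs)" by (simp add: finite_vars)
  then obtain n where n: "vars gt \<union> vars gs \<subseteq> {..<n}" by (auto simp: finite_nat_set_iff_bounded)
  define as where "as = map env [0..<n]"
  have asA: "set as \<subseteq> carrier (localization A e)" using env by (auto simp: as_def loc_carrier)
  have lenas: "length as = loc_ar (gt, n)" "length as = loc_ar (gs, n)" by (auto simp: as_def loc_ar_def)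
  have sym: "(gt, n) \<in> loc_sym ar" "(gs, n) \<in> loc_sym ar" using wfgt wfgs n by (auto simp: loc_sym_def)
  have key: "k (app1 A e (eval A env u)) = app1 B e (eval B (k \<circ> env) u)"
    if "(u, n) \<in> loc_sym ar" "vars u \<subseteq> {..<n}" for u
  proof -
    have "k (ops (localization A e) (u, n) as) = ops (localization B e) (u, n) (map k as)"
      using khom that asA by (auto simp: as_def loc_ar_def)
    moreover have "eval A (\<lambda>i. as ! i) u = eval A env u"
      using that by (intro eval_cong) (auto simp: as_def)
    moreover have "eval B (\<lambda>i. map k as ! i) u = eval B (k \<circ> env) u"
      using that by (intro eval_cong) (auto simp: as_def)
    ultimately show ?thesis by (simp add: loc_ops)
  qed
  have "eval A env gt = eval A env gs"
    unfolding gt_def gs_def eval_subst using eq by simp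
  then have "app1 B e (eval B (k \<circ> env) gt) = app1 B e (eval B (k \<circ> env) gs)"
    using key[OF sym(1)] key[OF sym(2)] n by auto
  moreover have "eval B (k \<circ> env) gt = app1 B g (eval B (k \<circ> env) t)"
    unfolding gt_def eval_subst app1_def by simp
  moreover have "eval B (k \<circ> env) gs = app1 B g (eval B (k \<circ> env) s)"
    unfolding gs_def eval_subst app1_def by simp
  ultimately show False using gne by simp
qed

lemma sep_transfer2:
  fixes A :: "('f, 'a) algebra" and B :: "('f, 'b) algebra"
  assumes algB: "is_algebra UNIV ar B" and ue: "unary_term ar e" and sepB: "separates ar B e"
    and kmap: "\<forall>x\<in>app1 A e ` carrier A. k x \<in> app1 B e ` carrier B"
    and khom: "\<forall>s\<in>loc_sym ar. \<forall>as. length as = loc_ar s \<and> set as \<subseteq> carrier (localization A e) \<longrightarrow>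
                 k (ops (localization A e) s as) = ops (localization B e) s (map k as)"
    and wft: "wf_trm ar t" and wfs: "wf_trm ar s"
    and env1: "\<forall>i. env1 i \<in> app1 A e ` carrier A"
    and env2: "\<forall>i. env2 i \<in> app1 A e ` carrier A"
    and eq: "eval A env1 t = eval A env2 s"
  shows "eval B (k \<circ> env1) t = eval B (k \<circ> env2) s"
proof -
  define env where "env = (\<lambda>i::nat. if even i then env1 (i div 2) else env2 (i div 2))"
  define t' where "t' = subst (\<lambda>i. Var (2 * i)) t"
  define s' where "s' = subst (\<lambda>i. Var (2 * i + 1)) s"
  have e1: "eval C (f \<circ> env) t' = eval C (f \<circ> env1) t" for C :: "('f, 'c) algebra" and f
    unfolding t'_def eval_subst by (simp add: env_def comp_def)
  have e2: "eval C (f \<circ> env) s' = eval C (f \<circ> env2) s" for C :: "('f, 'c) algebra" and f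
    unfolding s'_def eval_subst by (simp add: env_def comp_def)
  have "eval B (k \<circ> env) t' = eval B (k \<circ> env) s'"
  proof (rule sep_transfer[OF algB ue sepB kmap khom])
    show "wf_trm ar t'" using wft by (auto simp: t'_def intro: wf_subst)
    show "wf_trm ar s'" using wfs by (auto simp: s'_def intro: wf_subst)
    show "\<forall>i. env i \<in> app1 A e ` carrier A" using env1 env2 by (simp add: env_def)
    show "eval A env t' = eval A env s'"
      using e1[of A id] e2[of A id] eq by simp
  qed
  then show ?thesis using e1[of B k] e2[of B k] by simp
qed

lemma inv_hom:
  assumes alg: "\<forall>f\<in>Sym. \<forall>as. length as = ar f \<and> set as \<subseteq> carrier C \<longrightarrow> ops C f as \<in> carrier C"
    and bij: "bij_betw k (carrier C) (carrier D)"
    and hom: "\<forall>f\<in>Sym. \<forall>as. length as = ar f \<and> set as \<subseteq> carrier C \<longrightarrow> k (ops C f as) = ops D f (map k as)"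
  shows "\<forall>f\<in>Sym. \<forall>bs. length bs = ar f \<and> set bs \<subseteq> carrier D \<longrightarrow>
           inv_into (carrier C) k (ops D f bs) = ops C f (map (inv_into (carrier C) k) bs)"
proof (intro ballI allI impI)
  fix f bs assume f: "f \<in> Sym" and bs: "length bs = ar f \<and> set bs \<subseteq> carrier D"
  let ?k' = "inv_into (carrier C) k"
  define as where "as = map ?k' bs"
  have asC: "set as \<subseteq> carrier C" using bs bij by (auto simp: as_def bij_betw_def inv_into_into)
  have mapk: "map k as = bs" using bs bij unfolding as_def
    by (auto simp: bij_betw_def f_inv_into_f intro!: map_idI)
  have "ops D f bs = k (ops C f as)" using hom f asC bs mapk by (auto simp: as_def)
  then have "?k' (ops D f bs) = ops C f as"
    using alg f asC bs bij by (auto simp: as_def bij_betw_def inv_into_f_f)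
  then show "?k' (ops D f bs) = ops C f (map ?k' bs)" by (simp add: as_def)
qed

lemma loc_alg:
  assumes alg: "is_algebra UNIV ar A" and ue: "unary_term ar e"
  shows "\<forall>s\<in>loc_sym ar. \<forall>as. length as = loc_ar s \<and> set as \<subseteq> carrier (localization A e) \<longrightarrow>
           ops (localization A e) s as \<in> carrier (localization A e)"
proof (intro ballI allI impI)
  fix s as assume s: "s \<in> loc_sym ar" and as: "length as = loc_ar s \<and> set as \<subseteq> carrier (localization A e)"
  obtain t n where tn: "s = (t, n)" by (cases s)
  have EA: "app1 A e ` carrier A \<subseteq> carrier A" using app1_closed[OF alg ue] by auto
  have "eval A (\<lambda>i. as ! i) t \<in> carrier A"
  proof (rule eval_closed[OF alg])
    show "wf_trm ar t" using s tn by (simp add: loc_sym_def)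
    show "\<forall>i\<in>vars t. as ! i \<in> carrier A"
      using s tn as EA by (auto simp: loc_sym_def loc_ar_def loc_carrier) (metis lessThan_iff nth_mem subsetD)
  qed
  then show "ops (localization A e) s as \<in> carrier (localization A e)"
    by (simp add: tn loc_ops loc_carrier)
qed

lemma forward:
  fixes A :: "('f, 'a) algebra" and B :: "('f, 'b) algebra"
  assumes algA: "is_algebra UNIV ar A" and algB: "is_algebra UNIV ar B" and ue: "unary_term ar e"
    and iso: "iso UNIV ar A B"
  shows "iso (loc_sym ar) loc_ar (localization A e) (localization B e)"
proof -
  obtain h where bij: "bij_betw h (carrier A) (carrier B)"
    and hom: "\<forall>f as. length as = ar f \<and> set as \<subseteq> carrier A \<longrightarrow> h (ops A f as) = ops B f (map h as)"
    using iso unfolding iso_def by blast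
  have he: "h (app1 A e x) = app1 B e (h x)" if "x \<in> carrier A" for x
    using hom_eval[OF hom algA, of e "\<lambda>_. x"] ue that by (simp add: app1_def unary_term_def comp_def)
  have EA: "app1 A e ` carrier A \<subseteq> carrier A" using app1_closed[OF algA ue] by auto
  have "h ` (app1 A e ` carrier A) = app1 B e ` (h ` carrier A)"
    using he by (auto simp: image_iff)
  then have im: "h ` (app1 A e ` carrier A) = app1 B e ` carrier B" using bij by (simp add: bij_betw_def)
  have bij2: "bij_betw h (carrier (localization A e)) (carrier (localization B e))"
    unfolding loc_carrier bij_betw_def using im bij EA by (auto simp: bij_betw_def intro: inj_on_subset)
  show ?thesis unfolding iso_def
  proof (intro exI conjI ballI allI impI, fact bij2)
    fix s as assume s: "s \<in> loc_sym ar" and as: "length as = loc_ar s \<and> set as \<subseteq> carrier (localization A e)"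
    obtain t n where tn: "s = (t, n)" by (cases s)
    have wft: "wf_trm ar t" and vt: "vars t \<subseteq> {..<n}" using s tn by (auto simp: loc_sym_def)
    have ln: "length as = n" using as tn by (simp add: loc_ar_def)
    have asA: "\<forall>i\<in>vars t. as ! i \<in> carrier A"
      using vt ln as EA by (auto simp: loc_carrier) (metis lessThan_iff nth_mem subsetD)
    have "h (eval A (\<lambda>i. as ! i) t) = eval B (h \<circ> (\<lambda>i. as ! i)) t"
      by (rule hom_eval[OF hom algA wft asA])
    also have "\<dots> = eval B (\<lambda>i. map h as ! i) t"
      using vt ln by (intro eval_cong) auto
    finally have 1: "h (eval A (\<lambda>i. as ! i) t) = eval B (\<lambda>i. map h as ! i) t" .
    have "eval A (\<lambda>i. as ! i) t \<in> carrier A" by (rule eval_closed[OF algA wft asA])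
    then show "h (ops (localization A e) s as) = ops (localization B e) s (map h as)"
      by (simp add: tn loc_ops he 1)
  qed
qed

lemma backward:
  fixes A :: "('f, 'a) algebra" and B :: "('f, 'b) algebra"
  assumes algA: "is_algebra UNIV ar A" and algB: "is_algebra UNIV ar B" and ue: "unary_term ar e"
    and sepA: "separates ar A e" and sepB: "separates ar B e"
    and dA: "dense ar A e" and dB: "dense ar B e"
    and liso: "iso (loc_sym ar) loc_ar (localization A e) (localization B e)"
  shows "iso UNIV ar A B"
proof -
  define EA where "EA = app1 A e ` carrier A"
  define EB where "EB = app1 B e ` carrier B"
  obtain k where kb: "bij_betw k (carrier (localization A e)) (carrier (localization B e))"
    and kh: "\<forall>s\<in>loc_sym ar. \<forall>as. length as = loc_ar s \<and> set as \<subseteq> carrier (localization A e) \<longrightarrow>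
                 k (ops (localization A e) s as) = ops (localization B e) s (map k as)"
    using liso unfolding iso_def by blast
  have kb': "bij_betw k EA EB" using kb by (simp add: loc_carrier EA_def EB_def)
  have EAA: "EA \<subseteq> carrier A" using app1_closed[OF algA ue] by (auto simp: EA_def)
  have EBB: "EB \<subseteq> carrier B" using app1_closed[OF algB ue] by (auto simp: EB_def)
  show ?thesis
  proof (cases "carrier A = {}")
    case True
    then have "EA = {}" by (simp add: EA_def)
    then have "EB = {}" using kb' by (simp add: bij_betw_def)
    then have "carrier B = {}" by (simp add: EB_def)
    show ?thesis unfolding iso_def
    proof (intro exI[of _ "\<lambda>_. undefined"] conjI allI impI ballI)
      show "bij_betw (\<lambda>_. undefined) (carrier A) (carrier B)" using True \<open>carrier B = {}\<close> by (simp add: bij_betw_def)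
      fix f and as :: "'a list" assume "length as = ar f \<and> set as \<subseteq> carrier A"
      then have "ops A f as \<in> carrier A" using algA by (simp add: is_algebra_def)
      then show "undefined = ops B f (map (\<lambda>_. undefined) as)" using True by simp
    qed
  next
    case False
    then obtain a0 where a0: "a0 \<in> carrier A" by blast
    have x0: "app1 A e a0 \<in> EA" using a0 by (simp add: EA_def)
    then have y0: "k (app1 A e a0) \<in> EB" using kb' by (meson bij_betwE)
    have repA: "\<exists>t env. wf_trm ar t \<and> (\<forall>i. env i \<in> EA) \<and> eval A env t = a" if "a \<in> carrier A" for a
      using rep[of a ar A EA, OF _ x0] that dA by (simp add: dense_def EA_def)
    have repB: "\<exists>t env. wf_trm ar t \<and> (\<forall>i. env i \<in> EB) \<and> eval B env t = b" if "b \<in> carrier B" for b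
      using rep[of b ar B EB, OF _ y0] that dB by (simp add: dense_def EB_def)
    define k' where "k' = inv_into (carrier (localization A e)) k"
    have k'b: "bij_betw k' EB EA" using kb' unfolding k'_def loc_carrier EA_def[symmetric]
      by (rule bij_betw_inv_into)
    have k'h: "\<forall>s\<in>loc_sym ar. \<forall>bs. length bs = loc_ar s \<and> set bs \<subseteq> carrier (localization B e) \<longrightarrow>
                 k' (ops (localization B e) s bs) = ops (localization A e) s (map k' bs)"
      unfolding k'_def by (rule inv_hom[OF loc_alg[OF algA ue] kb kh])
    have kk': "k' (k x) = x" if "x \<in> EA" for x
      using kb' that unfolding k'_def loc_carrier EA_def[symmetric] by (simp add: bij_betw_def)
    have k'k: "k (k' y) = y" if "y \<in> EB" for y
      using kb' that unfolding k'_def loc_carrier EA_def[symmetric] by (simp add: bij_betw_def f_inv_into_f)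
    have kmap: "\<forall>x\<in>app1 A e ` carrier A. k x \<in> app1 B e ` carrier B"
      using kb' unfolding EA_def EB_def by (meson bij_betwE)
    have k'map: "\<forall>x\<in>app1 B e ` carrier B. k' x \<in> app1 A e ` carrier A"
      using k'b unfolding EA_def EB_def by (meson bij_betwE)
    have WD: "eval B (k \<circ> env1) t = eval B (k \<circ> env2) s"
      if "wf_trm ar t" "wf_trm ar s" "\<forall>i. env1 i \<in> EA" "\<forall>i. env2 i \<in> EA"
         "eval A env1 t = eval A env2 s" for t s env1 env2
    proof -
      have "\<forall>i. env1 i \<in> app1 A e ` carrier A" "\<forall>i. env2 i \<in> app1 A e ` carrier A"
        using that(3,4) by (simp_all add: EA_def)
      then show ?thesis by (rule sep_transfer2[OF algB ue sepB kmap kh that(1,2) _ _ that(5)])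
    qed
    have WD': "eval A (k' \<circ> env1) t = eval A (k' \<circ> env2) s"
      if "wf_trm ar t" "wf_trm ar s" "\<forall>i. env1 i \<in> EB" "\<forall>i. env2 i \<in> EB"
         "eval B env1 t = eval B env2 s" for t s env1 env2
    proof -
      have "\<forall>i. env1 i \<in> app1 B e ` carrier B" "\<forall>i. env2 i \<in> app1 B e ` carrier B"
        using that(3,4) by (simp_all add: EB_def)
      then show ?thesis by (rule sep_transfer2[OF algA ue sepA k'map k'h that(1,2) _ _ that(5)])
    qed
    define h where "h a = (SOME b. \<exists>t env. wf_trm ar t \<and> (\<forall>i. env i \<in> EA) \<and> eval A env t = a
                                \<and> b = eval B (k \<circ> env) t)" for a
    have hval: "h (eval A env t) = eval B (k \<circ> env) t" if "wf_trm ar t" "\<forall>i. env i \<in> EA" for t env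
    proof -
      let ?P = "\<lambda>b. \<exists>t' env'. wf_trm ar t' \<and> (\<forall>i. env' i \<in> EA) \<and> eval A env' t' = eval A env t
                                \<and> b = eval B (k \<circ> env') t'"
      have "?P (eval B (k \<circ> env) t)" using that by blast
      then have "?P (h (eval A env t))" unfolding h_def by (rule someI)
      then obtain t' env' where "wf_trm ar t'" "\<forall>i. env' i \<in> EA" "eval A env' t' = eval A env t"
        "h (eval A env t) = eval B (k \<circ> env') t'" by blast
      then show ?thesis using WD[of t' t env' env] that by simp
    qed
    have kenvB: "\<forall>i\<in>vars t. (k \<circ> env) i \<in> carrier B" if "\<forall>i. env i \<in> EA" for env and t :: "'f trm"
      using that kb' EBB by (auto dest: bij_betwE)
    show ?thesis unfolding iso_def
    proof (intro exI conjI allI impI ballI)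
      show "bij_betw h (carrier A) (carrier B)"
        unfolding bij_betw_def
      proof (intro conjI)
        show "inj_on h (carrier A)"
        proof (rule inj_onI)
          fix a b assume a: "a \<in> carrier A" and b: "b \<in> carrier A" and hab: "h a = h b"
          obtain t1 env1 where 1: "wf_trm ar t1" "\<forall>i. env1 i \<in> EA" "eval A env1 t1 = a"
            using repA[OF a] by blast
          obtain t2 env2 where 2: "wf_trm ar t2" "\<forall>i. env2 i \<in> EA" "eval A env2 t2 = b"
            using repA[OF b] by blast
          have "eval B (k \<circ> env1) t1 = eval B (k \<circ> env2) t2"
            using hab hval[OF 1(1,2)] hval[OF 2(1,2)] 1(3) 2(3) by simp
          moreover have "\<forall>i. (k \<circ> env1) i \<in> EB" "\<forall>i. (k \<circ> env2) i \<in> EB"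
            using 1(2) 2(2) kb' by (auto dest: bij_betwE)
          ultimately have "eval A (k' \<circ> (k \<circ> env1)) t1 = eval A (k' \<circ> (k \<circ> env2)) t2"
            using WD' 1(1) 2(1) by blast
          moreover have "k' \<circ> (k \<circ> env1) = env1" "k' \<circ> (k \<circ> env2) = env2"
            using 1(2) 2(2) kk' by auto
          ultimately show "a = b" using 1(3) 2(3) by simp
        qed
        show "h ` carrier A = carrier B"
        proof
          show "h ` carrier A \<subseteq> carrier B"
          proof
            fix y assume "y \<in> h ` carrier A"
            then obtain a where a: "a \<in> carrier A" "y = h a" by blast
            obtain t env where 1: "wf_trm ar t" "\<forall>i. env i \<in> EA" "eval A env t = a"
              using repA[OF a(1)] by blast
            show "y \<in> carrier B" using a hval[OF 1(1,2)] 1(3) eval_closed[OF algB 1(1) kenvB[OF 1(2)]]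
              by (simp add: comp_def)
          qed
          show "carrier B \<subseteq> h ` carrier A"
          proof
            fix b assume b: "b \<in> carrier B"
            obtain t env where 1: "wf_trm ar t" "\<forall>i. env i \<in> EB" "eval B env t = b"
              using repB[OF b] by blast
            have 2: "\<forall>i. (k' \<circ> env) i \<in> EA" using 1(2) k'b by (auto dest: bij_betwE)
            have kk: "k \<circ> (k' \<circ> env) = env" using 1(2) k'k by auto
            have "h (eval A (k' \<circ> env) t) = eval B (k \<circ> (k' \<circ> env)) t" by (rule hval[OF 1(1) 2])
            also have "\<dots> = b" unfolding kk by (rule 1(3))
            finally have "h (eval A (k' \<circ> env) t) = b" .
            moreover have "eval A (k' \<circ> env) t \<in> carrier A"
              using eval_closed[OF algA 1(1), of "k' \<circ> env"] 2 EAA by (metis subsetD)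
            ultimately show "b \<in> h ` carrier A" by blast
          qed
        qed
      qed
    next
      fix f and as :: "'a list" assume as: "length as = ar f \<and> set as \<subseteq> carrier A"
      let ?m = "length as"
      have "\<forall>j<?m. \<exists>p. wf_trm ar (fst p) \<and> (\<forall>i. snd p i \<in> EA) \<and> eval A (snd p) (fst p) = as ! j"
      proof (intro allI impI)
        fix j assume "j < ?m"
        then have "as ! j \<in> carrier A" using as by auto
        then obtain t env where "wf_trm ar t" "\<forall>i. env i \<in> EA" "eval A env t = as ! j"
          using repA by blast
        then show "\<exists>p. wf_trm ar (fst p) \<and> (\<forall>i. snd p i \<in> EA) \<and> eval A (snd p) (fst p) = as ! j"
          by (intro exI[of _ "(t, env)"]) simp
      qed
      then obtain P where P: "\<forall>j<?m. wf_trm ar (fst (P j)) \<and> (\<forall>i. snd (P j) i \<in> EA) \<and> eval A (snd (P j)) (fst (P j)) = as ! j"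
        by metis
      define env where "env = (\<lambda>i. if i mod ?m < ?m then snd (P (i mod ?m)) (i div ?m) else app1 A e a0)"
      define ts where "ts = map (\<lambda>j. subst (\<lambda>i. Var (j + ?m * i)) (fst (P j))) [0..<?m]"
      have dm: "\<And>x i. x < ?m \<Longrightarrow> (x + ?m * i) div ?m = i"
        by (metis add.commute add_0 div_less div_mult_self2 less_zeroE)
      have envA: "\<forall>i. env i \<in> EA" using P x0 by (auto simp: env_def)
      have wf: "wf_trm ar (App f ts)" using P as by (auto simp: ts_def intro!: wf_subst)
      have evA: "map (eval A env) ts = as"
      proof -
        have "map (eval A env) ts = map (\<lambda>j. as ! j) [0..<?m]"
          using P dm by (auto simp: ts_def eval_subst env_def)
        also have "\<dots> = as" by (rule map_nth)
        finally show ?thesis .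
      qed
      have evB: "map (eval B (k \<circ> env)) ts = map h as"
      proof -
        have "map (eval B (k \<circ> env)) ts = map (\<lambda>j. eval B (k \<circ> snd (P j)) (fst (P j))) [0..<?m]"
          using P dm by (auto simp: ts_def eval_subst env_def comp_def)
        also have "\<dots> = map (\<lambda>j. h (as ! j)) [0..<?m]"
        proof (rule map_cong[OF refl])
          fix j assume "j \<in> set [0..<?m]"
          then have "j < ?m" by simp
          then have p: "wf_trm ar (fst (P j))" "\<forall>i. snd (P j) i \<in> EA" "eval A (snd (P j)) (fst (P j)) = as ! j"
            using P by auto
          show "eval B (k \<circ> snd (P j)) (fst (P j)) = h (as ! j)"
            using hval[OF p(1,2)] p(3) by simp
        qed
        also have "\<dots> = map h (map (\<lambda>j. as ! j) [0..<?m])" by simp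
        also have "\<dots> = map h as" by (simp only: map_nth)
        finally show ?thesis .
      qed
      have "h (ops A f as) = h (eval A env (App f ts))" using evA by simp
      also have "\<dots> = eval B (k \<circ> env) (App f ts)" by (rule hval[OF wf envA])
      also have "\<dots> = ops B f (map h as)" using evB by simp
      finally show "h (ops A f as) = ops B f (map h as)" .
    qed
  qed
qed

theorem corollary2p4:
  fixes ar :: "'f \<Rightarrow> nat"
    and A :: "('f, 'a) algebra" and B :: "('f, 'b) algebra" and e :: "'f trm"
  assumes "is_algebra UNIV ar A" and "is_algebra UNIV ar B"
    and "unary_term ar e"
    and "idempotent A e" and "idempotent B e"
    and "separates ar A e" and "separates ar B e"
    and "dense ar A e" and "dense ar B e"
  shows "iso UNIV ar A B \<longleftrightarrow>
         iso (loc_sym ar) loc_ar (localization A e) (localization B e)"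
  using forward[OF assms(1,2,3)] backward[OF assms(1,2,3,6,7,8,9)] by blast

end
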